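(* Let $A$ (in $\mathcal H$) and $B$ (in $\mathcal K$) be closed densely defined operators with $A\dashv B$, with a (possibly unbounded) intertwining operator $T$, and assume that $T^{-1}$ is bounded and everywhere defined on $\mathcal K$. Then $\rho(A)\setminus\sigma_p(B)\subseteq\rho(B)$.
   Context: A closed, densely defined operator $T:\mathcal H\to\mathcal K$ is called an intertwining operator for $A$ and $B$ if: (io$_0$) $D(A)\subset D(T)$ and $D(TA)=D(A)$; (io$_1$) $T$ maps $D(A)$ into $D(B)$; (io$_2$) $BT\xi=TA\xi$ for all $\xi\in D(A)$. We write $A\dashv B$ if there exists an intertwining operator $T$ for $A$ and $B$ which is injective with densely defined inverse $T^{-1}$. $\rho$ denotes the resolvent set, $\sigma_p$ the point spectrum. *)

theory Defs
  imports "HOL-Analysis.Analysis"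
begin

text \<open>HOL-Analysis only provides real inner product spaces.
A complex Hilbert space is a real Hilbert space (with real inner product Re of the
complex one) together with a complex scalar multiplication extending the real one,
for which multiplication by the imaginary unit is isometric (equivalently, the
complex inner product is recovered by polarization).\<close>

class complex_hilbert = real_inner + complete_space +
  fixes scaleC :: "complex \<Rightarrow> 'a \<Rightarrow> 'a"
  assumes scaleC_add_right: "scaleC a (x + y) = scaleC a x + scaleC a y"
    and scaleC_add_left: "scaleC (a + b) x = scaleC a x + scaleC b x"
    and scaleC_scaleC: "scaleC a (scaleC b x) = scaleC (a * b) x"
    and scaleC_of_real: "scaleC (complex_of_real r) x = scaleR r x"
    and inner_scaleC_ii: "inner (scaleC \<i> x) (scaleC \<i> y) = inner x y"

text \<open>A (possibly unbounded) operator is given by its domain D and a function f,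
which is only relevant on D.\<close>

definition csubspace :: "'a::complex_hilbert set \<Rightarrow> bool" where
  "csubspace S \<longleftrightarrow> 0 \<in> S \<and> (\<forall>x\<in>S. \<forall>y\<in>S. x + y \<in> S) \<and> (\<forall>c. \<forall>x\<in>S. scaleC c x \<in> S)"

definition lin_op :: "'a::complex_hilbert set \<Rightarrow> ('a \<Rightarrow> 'b::complex_hilbert) \<Rightarrow> bool" where
  "lin_op D f \<longleftrightarrow> csubspace D \<and>
     (\<forall>x\<in>D. \<forall>y\<in>D. f (x + y) = f x + f y) \<and>
     (\<forall>c. \<forall>x\<in>D. f (scaleC c x) = scaleC c (f x))"

definition graph :: "'a set \<Rightarrow> ('a \<Rightarrow> 'b) \<Rightarrow> ('a \<times> 'b) set" where
  "graph D f = {(x, f x) | x. x \<in> D}"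

definition closed_op :: "'a::complex_hilbert set \<Rightarrow> ('a \<Rightarrow> 'b::complex_hilbert) \<Rightarrow> bool" where
  "closed_op D f \<longleftrightarrow> lin_op D f \<and> closed (graph D f)"

definition densely_defined :: "'a::complex_hilbert set \<Rightarrow> bool" where
  "densely_defined D \<longleftrightarrow> closure D = UNIV"

definition closed_dd :: "'a::complex_hilbert set \<Rightarrow> ('a \<Rightarrow> 'b::complex_hilbert) \<Rightarrow> bool" where
  "closed_dd D f \<longleftrightarrow> closed_op D f \<and> densely_defined D"

definition intertwining ::
  "'h::complex_hilbert set \<Rightarrow> ('h \<Rightarrow> 'k::complex_hilbert) \<Rightarrow>
   'h set \<Rightarrow> ('h \<Rightarrow> 'h) \<Rightarrow> 'k set \<Rightarrow> ('k \<Rightarrow> 'k) \<Rightarrow> bool" where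
  "intertwining DT T DA A DB B \<longleftrightarrow>
     closed_dd DT T \<and>
     DA \<subseteq> DT \<and> {x \<in> DA. A x \<in> DT} = DA \<and>
     (\<forall>x\<in>DA. T x \<in> DB) \<and>
     (\<forall>x\<in>DA. B (T x) = T (A x))"

definition resolvent_set :: "'a::complex_hilbert set \<Rightarrow> ('a \<Rightarrow> 'a) \<Rightarrow> complex set" where
  "resolvent_set D f = {z. bij_betw (\<lambda>x. f x - scaleC z x) D UNIV \<and>
      (\<exists>C. \<forall>y. norm (inv_into D (\<lambda>x. f x - scaleC z x) y) \<le> C * norm y)}"

definition point_spectrum :: "'a::complex_hilbert set \<Rightarrow> ('a \<Rightarrow> 'a) \<Rightarrow> complex set" where
  "point_spectrum D f = {z. \<exists>x\<in>D. x \<noteq> 0 \<and> f x = scaleC z x}"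

end

theory Submission
  imports Defs
begin

lemma scaleC_zero_right[simp]: "scaleC a (0::'a::complex_hilbert) = 0"
  using scaleC_add_right[of a 0 0] by simp
lemma scaleC_one[simp]: "scaleC 1 (x::'a::complex_hilbert) = x"
  using scaleC_of_real[of 1 x] by simp
lemma scaleC_minus_one: "scaleC (-1) (x::'a::complex_hilbert) = - x"
  using scaleC_of_real[of "-1" x] by simp
lemma scaleC_minus_right: "scaleC a (- (y::'a::complex_hilbert)) = - scaleC a y"
proof -
  have "scaleC a y + scaleC a (- y) = 0"
    using scaleC_add_right[of a y "-y"] by simp
  then show ?thesis by (simp add: eq_neg_iff_add_eq_0 add.commute)
qed
lemma scaleC_diff_right: "scaleC a ((x::'a::complex_hilbert) - y) = scaleC a x - scaleC a y"
  using scaleC_add_right[of a x "-y"] scaleC_minus_right[of a y] by simp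
lemma norm_scaleC_ii: "norm (scaleC \<i> (x::'a::complex_hilbert)) = norm x"
  by (simp add: norm_eq_sqrt_inner inner_scaleC_ii)
lemma scaleC_decomp: "scaleC z (x::'a::complex_hilbert) = Re z *\<^sub>R x + Im z *\<^sub>R scaleC \<i> x"
proof -
  have "z = complex_of_real (Re z) + complex_of_real (Im z) * \<i>" by (simp add: complex_eq_iff)
  then have "scaleC z x = scaleC (complex_of_real (Re z) + complex_of_real (Im z) * \<i>) x" by simp
  also have "\<dots> = Re z *\<^sub>R x + Im z *\<^sub>R scaleC \<i> x"
    by (simp only: scaleC_add_left flip: scaleC_scaleC) (simp only: scaleC_of_real)
  finally show ?thesis .
qed
lemma norm_scaleC_le: "norm (scaleC z (x::'a::complex_hilbert)) \<le> (\<bar>Re z\<bar> + \<bar>Im z\<bar>) * norm x"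
proof -
  have "norm (scaleC z (x::'a::complex_hilbert)) \<le> norm (Re z *\<^sub>R x) + norm (Im z *\<^sub>R scaleC \<i> x)"
    by (subst scaleC_decomp) (rule norm_triangle_ineq)
  also have "\<dots> = (\<bar>Re z\<bar> + \<bar>Im z\<bar>) * norm x" by (simp add: norm_scaleC_ii algebra_simps)
  finally show ?thesis .
qed
lemma tendsto_scaleC: fixes X :: "nat \<Rightarrow> 'a::complex_hilbert" assumes "X \<longlonglongrightarrow> x" shows "(\<lambda>n. scaleC z (X n)) \<longlonglongrightarrow> scaleC z x"
proof -
  have "(\<lambda>n. (Re z) *\<^sub>R X n + Im z *\<^sub>R scaleC \<i> (X n)) \<longlonglongrightarrow> Re z *\<^sub>R x + Im z *\<^sub>R scaleC \<i> x"
  proof (intro tendsto_add tendsto_scaleR tendsto_const assms)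
    have "(\<lambda>n. norm (scaleC \<i> (X n) - scaleC \<i> x)) \<longlonglongrightarrow> 0"
      using assms by (simp add: scaleC_diff_right[symmetric] norm_scaleC_ii tendsto_norm_zero_iff LIM_zero_iff)
    then show "(\<lambda>n. scaleC \<i> (X n)) \<longlonglongrightarrow> scaleC \<i> x"
      using tendsto_norm_zero_iff LIM_zero_cancel by blast
  qed
  then show ?thesis by (simp add: scaleC_decomp[symmetric])
qed

lemma lin_op_diff:
  assumes "lin_op D f" "x \<in> D" "y \<in> D"
  shows "x - y \<in> D" "f (x - y) = f x - f y"
proof -
  have c: "csubspace D" using assms(1) by (simp add: lin_op_def)
  have "scaleC (-1) y \<in> D" using c assms(3) by (simp add: csubspace_def)
  then have m: "- y \<in> D" by (simp add: scaleC_minus_one)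
  then show "x - y \<in> D" using c assms(2) unfolding csubspace_def by (metis diff_conv_add_uminus)
  have "f (- y) = - f y" using assms(1,3) unfolding lin_op_def
    by (metis scaleC_minus_one)
  then show "f (x - y) = f x - f y" using assms(1,2) m unfolding lin_op_def by (metis diff_conv_add_uminus)
qed

lemma lin_op_scale:
  assumes "lin_op D f" "x \<in> D"
  shows "scaleC c x \<in> D" "f (scaleC c x) = scaleC c (f x)"
  using assms by (auto simp: lin_op_def csubspace_def)

lemma lin_op_add:
  assumes "lin_op D f" "x \<in> D" "y \<in> D"
  shows "x + y \<in> D" "f (x + y) = f x + f y"
  using assms by (auto simp: lin_op_def csubspace_def)

lemma closed_graph_thm:
  fixes f :: "'a::banach \<Rightarrow> 'b::banach"
  assumes lin: "linear f"
    and cl: "\<And>X x y. X \<longlonglongrightarrow> x \<Longrightarrow> (\<lambda>n. f (X n)) \<longlonglongrightarrow> y \<Longrightarrow> f x = y"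
  shows "\<exists>C. \<forall>x. norm (f x) \<le> C * norm x"
proof -
  define S where "S n = closure {x. norm (f x) \<le> real n}" for n :: nat
  have "\<exists>n. interior (S n) \<noteq> {}"
  proof (rule ccontr)
    assume "\<not> (\<exists>n. interior (S n) \<noteq> {})"
    then have emp: "\<And>n. interior (S n) = {}" by blast
    have "euclidean interior_of \<Union>(range S) = {}"
    proof (rule Baire_category_alt)
      have cS: "closed (S n)" for n by (simp add: S_def)
      show "\<And>T. T \<in> range S \<Longrightarrow> closedin euclidean T \<and> euclidean interior_of T = {}"
        using cS emp by auto
    qed (auto simp: completely_metrizable_space_euclidean)
    moreover have "\<Union>(range S) = UNIV"
    proof -
      have "x \<in> S (nat \<lceil>norm (f x)\<rceil>)" for x
        unfolding S_def by (rule closure_subset[THEN subsetD]) (simp add: real_nat_ceiling_ge)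
      then show ?thesis by blast
    qed
    ultimately show False by simp
  qed
  then obtain n x0 where "x0 \<in> interior (S n)" by blast
  then obtain r where r0: "r > 0" "ball x0 r \<subseteq> interior (S n)"
    using open_contains_ball_eq[of "interior (S n)"] open_interior[of "S n"] by blast
  then have r: "r > 0" "ball x0 r \<subseteq> S n" using interior_subset[of "S n"] by auto
  have approx: "\<exists>u. norm (x - u) < e \<and> norm (f u) \<le> 2 * real n" if "norm x < r" "e > 0" for x e
  proof -
    have "x0 \<in> S n" "x0 + x \<in> S n" using r that by (auto simp: dist_norm)
    then have "\<exists>a. norm (f a) \<le> real n \<and> dist a (x0 + x) < e/2"
        "\<exists>b. norm (f b) \<le> real n \<and> dist b x0 < e/2"
      unfolding S_def closure_approachable mem_Collect_eq Bex_def using half_gt_zero[OF \<open>e > 0\<close>] by blast+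
    then obtain a b where ab: "norm (f a) \<le> real n" "dist a (x0 + x) < e/2"
        "norm (f b) \<le> real n" "dist b x0 < e/2"
      by blast
    have "norm (x - (a - b)) \<le> norm ((x0 + x) - a) + norm (b - x0)"
      by (rule order_trans[OF _ norm_triangle_ineq]) (simp add: algebra_simps)
    also have "\<dots> < e" using ab by (simp add: dist_norm norm_minus_commute)
    finally have 1: "norm (x - (a - b)) < e" .
    have "norm (f (a - b)) \<le> norm (f a) + norm (f b)"
      unfolding linear_diff[OF lin] by (rule norm_triangle_ineq4)
    then have "norm (f (a - b)) \<le> 2 * real n" using ab by simp
    with 1 show ?thesis by blast
  qed
  define M where "M = 4 * real n / r"
  have M0: "M \<ge> 0" using r by (simp add: M_def)
  have approx2: "\<exists>u. norm (x - u) < e \<and> norm (f u) \<le> M * norm x" if "e > 0" for x e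
  proof (cases "x = 0")
    case True
    then show ?thesis using that linear_0[OF lin] by (intro exI[of _ 0]) simp
  next
    case False
    define t where "t = r / (2 * norm x)"
    have t: "t > 0" using False r by (simp add: t_def)
    have "norm (t *\<^sub>R x) < r" using False r by (simp add: t_def)
    then obtain u' where u': "norm (t *\<^sub>R x - u') < e * t" "norm (f u') \<le> 2 * real n"
      using approx[of "t *\<^sub>R x" "e * t"] t \<open>e > 0\<close> by auto
    have "x - (1/t) *\<^sub>R u' = (1/t) *\<^sub>R (t *\<^sub>R x - u')" using t by (simp add: algebra_simps)
    then have "norm (x - (1/t) *\<^sub>R u') = (1/t) * norm (t *\<^sub>R x - u')" using t by simp
    also have "\<dots> < (1/t) * (e * t)" using u' t by (intro mult_strict_left_mono) auto
    also have "\<dots> = e" using t by simp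
    finally have 1: "norm (x - (1/t) *\<^sub>R u') < e" .
    have "norm (f ((1/t) *\<^sub>R u')) = (1/t) * norm (f u')"
      using linear_scale[OF lin] t by simp
    also have "\<dots> \<le> (1/t) * (2 * real n)" using u' t by (intro mult_left_mono) auto
    also have "\<dots> = M * norm x" using False r by (simp add: t_def M_def field_simps)
    finally show ?thesis using 1 by blast
  qed
  have "norm (f x) \<le> (2 * M) * norm x" for x
  proof (cases "x = 0")
    case True
    then show ?thesis using linear_0[OF lin] by simp
  next
    case False
    define U where "U y k = (SOME u. norm (y - u) < norm x / 2 ^ Suc k \<and> norm (f u) \<le> M * norm y)" for y k
    have U: "norm (y - U y k) < norm x / 2 ^ Suc k \<and> norm (f (U y k)) \<le> M * norm y" for y k
      unfolding U_def by (rule someI_ex) (rule approx2, use False in simp)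
    define e where "e = rec_nat x (\<lambda>k ek. ek - U ek k)"
    have e0: "e 0 = x" and eS: "e (Suc k) = e k - U (e k) k" for k by (simp_all add: e_def)
    have eb: "norm (e k) \<le> norm x * (1/2) ^ k" for k
    proof (cases k)
      case 0 then show ?thesis by (simp add: e0)
    next
      case (Suc j)
      then show ?thesis using U[of "e j" j] by (simp add: eS power_one_over field_simps)
    qed
    have psum: "(\<Sum>k<N. U (e k) k) = x - e N" for N
      by (induction N) (simp_all add: e0 eS)
    have "e \<longlonglongrightarrow> 0"
    proof (rule Lim_null_comparison)
      show "\<forall>\<^sub>F k in sequentially. norm (e k) \<le> norm x * (1/2) ^ k" using eb by simp
      show "(\<lambda>k. norm x * (1/2::real) ^ k) \<longlonglongrightarrow> 0"
        by (intro tendsto_mult_right_zero LIMSEQ_power_zero) simp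
    qed
    then have lim1: "(\<lambda>N. x - e N) \<longlonglongrightarrow> x"
      using tendsto_diff[OF tendsto_const[of x] \<open>e \<longlonglongrightarrow> 0\<close>] by simp
    define g where "g k = f (U (e k) k)" for k
    have gb: "norm (g k) \<le> M * norm x * (1/2) ^ k" for k
    proof -
      have "norm (g k) \<le> M * norm (e k)" using U[of "e k" k] unfolding g_def by simp
      also have "\<dots> \<le> M * (norm x * (1/2) ^ k)" using eb[of k] M0 by (rule mult_left_mono)
      finally show ?thesis by (simp add: mult.assoc)
    qed
    have sg: "summable (\<lambda>k. M * norm x * (1/2::real) ^ k)"
      by (intro summable_mult summable_geometric) simp
    have sng: "summable (\<lambda>k. norm (g k))"
      by (rule summable_comparison_test[OF _ sg]) (use gb in auto)
    have sg2: "summable g" using sng summable_norm_cancel by blast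
    have "(\<lambda>N. f (x - e N)) \<longlonglongrightarrow> suminf g"
    proof -
      have "f (x - e N) = (\<Sum>k<N. g k)" for N
        unfolding psum[symmetric] g_def by (simp add: linear_sum[OF lin])
      then show ?thesis using summable_LIMSEQ[OF sg2] by simp
    qed
    from cl[OF lim1 this] have fx: "f x = suminf g" .
    have "norm (suminf g) \<le> (\<Sum>k. norm (g k))" by (rule summable_norm[OF sng])
    also have "\<dots> \<le> (\<Sum>k. M * norm x * (1/2::real) ^ k)" by (rule suminf_le[OF gb sng sg])
    also have "\<dots> = M * norm x * 2"
      by (subst suminf_mult) (simp_all add: suminf_geometric)
    finally show ?thesis using fx by (simp add: mult_ac)
  qed
  then show ?thesis by blast
qed


subclass (in complex_hilbert) banach ..

lemma scaleC_mult_comm: "scaleC c (scaleC z (x::'a::complex_hilbert)) = scaleC z (scaleC c x)"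
  by (simp add: scaleC_scaleC mult.commute)

theorem corollary2p10:
  fixes DA :: "'h::complex_hilbert set" and A :: "'h \<Rightarrow> 'h"
    and DB :: "'k::complex_hilbert set" and B :: "'k \<Rightarrow> 'k"
    and DT :: "'h set" and T :: "'h \<Rightarrow> 'k"
  assumes A: "closed_dd DA A"
    and B: "closed_dd DB B"
    and T_int: "intertwining DT T DA A DB B"
    and T_inj: "inj_on T DT"
    and Tinv_dense: "densely_defined (T ` DT)"
    and Tinv_everywhere: "T ` DT = UNIV"
    and Tinv_bounded: "\<exists>C. \<forall>y. norm (inv_into DT T y) \<le> C * norm y"
  shows "resolvent_set DA A - point_spectrum DB B \<subseteq> resolvent_set DB B"
proof
  fix z assume z: "z \<in> resolvent_set DA A - point_spectrum DB B"
  have bijA: "bij_betw (\<lambda>x. A x - scaleC z x) DA UNIV"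
    using z by (simp add: resolvent_set_def)
  have notev: "\<And>x. x \<in> DB \<Longrightarrow> B x = scaleC z x \<Longrightarrow> x = 0"
    using z by (auto simp: point_spectrum_def)
  have linA: "lin_op DA A" using A by (simp add: closed_dd_def closed_op_def)
  have linB: "lin_op DB B" using B by (simp add: closed_dd_def closed_op_def)
  have clB: "closed (graph DB B)" using B by (simp add: closed_dd_def closed_op_def)
  have linT: "lin_op DT T" using T_int by (simp add: intertwining_def closed_dd_def closed_op_def)
  have DAT: "DA \<subseteq> DT" and ADT: "\<And>x. x \<in> DA \<Longrightarrow> A x \<in> DT"
    and TDB: "\<And>x. x \<in> DA \<Longrightarrow> T x \<in> DB" and BT: "\<And>x. x \<in> DA \<Longrightarrow> B (T x) = T (A x)"
    using T_int unfolding intertwining_def by blast+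
  define Bz where "Bz x = B x - scaleC z x" for x
  have Bz_diff: "Bz (x - y) = Bz x - Bz y" if "x \<in> DB" "y \<in> DB" for x y
    using lin_op_diff[OF linB that] by (simp add: Bz_def scaleC_diff_right)
  have Bz_add: "Bz (x + y) = Bz x + Bz y" if "x \<in> DB" "y \<in> DB" for x y
    using lin_op_add[OF linB that] by (simp add: Bz_def scaleC_add_right)
  have Bz_scale: "Bz (scaleC c x) = scaleC c (Bz x)" if "x \<in> DB" for x c
    using lin_op_scale[OF linB that] by (simp add: Bz_def scaleC_diff_right scaleC_mult_comm)
  have injB: "inj_on Bz DB"
  proof (rule inj_onI)
    fix x y assume xy: "x \<in> DB" "y \<in> DB" "Bz x = Bz y"
    have "x - y \<in> DB" using lin_op_diff[OF linB xy(1,2)] by simp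
    moreover have "Bz (x - y) = 0" using Bz_diff[OF xy(1,2)] xy(3) by simp
    then have "B (x - y) = scaleC z (x - y)" by (simp add: Bz_def)
    with \<open>x - y \<in> DB\<close> have "x - y = 0" by (rule notev)
    then show "x = y" by simp
  qed
  have surjB: "y \<in> Bz ` DB" for y
  proof -
    define s where "s = inv_into DT T y"
    have s: "s \<in> DT" "T s = y" using Tinv_everywhere unfolding s_def
      by (auto intro: inv_into_into f_inv_into_f)
    define a where "a = inv_into DA (\<lambda>x. A x - scaleC z x) s"
    have a: "a \<in> DA" "A a - scaleC z a = s" using bijA unfolding a_def bij_betw_def
      by (auto intro: inv_into_into f_inv_into_f)
    have aT: "a \<in> DT" using a DAT by auto
    have "Bz (T a) = T (A a) - scaleC z (T a)" using BT[OF a(1)] by (simp add: Bz_def)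
    also have "\<dots> = T (A a) - T (scaleC z a)" using lin_op_scale[OF linT aT] by simp
    also have "\<dots> = T (A a - scaleC z a)"
      using lin_op_diff[OF linT ADT[OF a(1)] lin_op_scale(1)[OF linT aT]] by simp
    also have "\<dots> = y" using a s by simp
    finally have "Bz (T a) = y" .
    then show ?thesis by (intro rev_image_eqI[OF TDB[OF a(1)]]) simp
  qed
  have bijB: "bij_betw Bz DB UNIV"
    unfolding bij_betw_def using injB surjB by auto
  define V where "V = inv_into DB Bz"
  have V: "V y \<in> DB" "Bz (V y) = y" for y
    using bijB unfolding V_def bij_betw_def by (auto intro: inv_into_into f_inv_into_f)
  have Vu: "V y = x" if "x \<in> DB" "Bz x = y" for x y
    unfolding V_def using injB that by (auto intro: inv_into_f_eq)
  have linV: "linear V"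
  proof (rule linearI)
    fix b1 b2
    show "V (b1 + b2) = V b1 + V b2"
      using Vu[OF lin_op_add(1)[OF linB V(1) V(1)]] Bz_add[OF V(1) V(1)] V(2) by simp
  next
    fix r :: real and b
    have "V (scaleC (complex_of_real r) b) = scaleC (complex_of_real r) (V b)"
      using Vu[OF lin_op_scale(1)[OF linB V(1)]] Bz_scale[OF V(1)] V(2) by simp
    then show "V (r *\<^sub>R b) = r *\<^sub>R V b" by (simp add: scaleC_of_real)
  qed
  have clV: "V y = w" if X: "X \<longlonglongrightarrow> y" and VX: "(\<lambda>n. V (X n)) \<longlonglongrightarrow> w" for X y w
  proof -
    have eqB: "B (V (X k)) = X k + scaleC z (V (X k))" for k
      using V(2)[of "X k"] by (simp add: Bz_def algebra_simps)
    have inG: "(V (X k), B (V (X k))) \<in> graph DB B" for k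
      using V(1) by (auto simp: graph_def)
    have "(\<lambda>k. (V (X k), B (V (X k)))) \<longlonglongrightarrow> (w, y + scaleC z w)"
      unfolding eqB by (intro tendsto_Pair tendsto_add X VX tendsto_scaleC)
    moreover have allG: "\<forall>n. (V (X n), B (V (X n))) \<in> graph DB B" using inG by blast
    ultimately have "(w, y + scaleC z w) \<in> graph DB B"
      using clB[unfolded closed_sequential_limits, rule_format, OF conjI[OF allG]] by blast
    then have "w \<in> DB" "B w = y + scaleC z w" by (auto simp: graph_def)
    then show ?thesis by (intro Vu) (simp_all add: Bz_def)
  qed
  obtain C where C: "\<forall>y. norm (V y) \<le> C * norm y"
  proof -
    have "\<exists>C. \<forall>y. norm (V y) \<le> C * norm y"
      by (rule closed_graph_thm[OF linV]) (rule clV)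
    then show ?thesis using that by blast
  qed
  have Bz_eq: "Bz = (\<lambda>x. B x - scaleC z x)" by (simp add: Bz_def fun_eq_iff)
  have "bij_betw (\<lambda>x. B x - scaleC z x) DB UNIV \<and> (\<exists>C. \<forall>y. norm (inv_into DB (\<lambda>x. B x - scaleC z x) y) \<le> C * norm y)"
    using bijB C unfolding V_def Bz_eq by blast
  then show "z \<in> resolvent_set DB B" unfolding resolvent_set_def by simp
qed

end
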